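(* Let $M$ be a magma satisfying $xy = xz$ and $(xy)z = x$ for all $x,y,z\in M$. Then $M$ satisfies $xy = x$ for all $x,y\in M$ if and only if $M$ avoids the magma $N$ on $\{0,1\}$ with Cayley table \[ \begin{array}{c|cc} N & 0 & 1 \\ \hline 0 & 1 & 1 \\ 1 & 0 & 0 \end{array}. \]
   Context: A magma is a nonempty set with a binary operation, written by juxtaposition. A magma $M$ avoids a magma $F$ if no submagma of $M$ is isomorphic to $F$. *)

theory Defs
  imports Main
begin

definition magma :: "'a set \<Rightarrow> ('a \<Rightarrow> 'a \<Rightarrow> 'a) \<Rightarrow> bool" where
  "magma M f \<longleftrightarrow> M \<noteq> {} \<and> (\<forall>x\<in>M. \<forall>y\<in>M. f x y \<in> M)"

definition magma_iso :: "'a set \<Rightarrow> ('a \<Rightarrow> 'a \<Rightarrow> 'a) \<Rightarrow> 'b set \<Rightarrow> ('b \<Rightarrow> 'b \<Rightarrow> 'b) \<Rightarrow> bool" where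
  "magma_iso A f B g \<longleftrightarrow>
     (\<exists>h. bij_betw h A B \<and> (\<forall>x\<in>A. \<forall>y\<in>A. h (f x y) = g (h x) (h y)))"

definition submagma :: "'a set \<Rightarrow> 'a set \<Rightarrow> ('a \<Rightarrow> 'a \<Rightarrow> 'a) \<Rightarrow> bool" where
  "submagma S M f \<longleftrightarrow> S \<subseteq> M \<and> magma S f"

definition avoids :: "'a set \<Rightarrow> ('a \<Rightarrow> 'a \<Rightarrow> 'a) \<Rightarrow> 'b set \<Rightarrow> ('b \<Rightarrow> 'b \<Rightarrow> 'b) \<Rightarrow> bool" where
  "avoids M f F g \<longleftrightarrow> \<not> (\<exists>S. submagma S M f \<and> magma_iso F g S f)"

definition N_carrier :: "nat set" where "N_carrier = {0, 1}"
definition N_op :: "nat \<Rightarrow> nat \<Rightarrow> nat" where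
  "N_op x y = (if x = 0 then 1 else 0)"

end

theory Submission
  imports Defs
begin

theorem mainTheorem5:
  fixes M :: "'a set" and f :: "'a \<Rightarrow> 'a \<Rightarrow> 'a"
  assumes "magma M f"
    and "\<forall>x\<in>M. \<forall>y\<in>M. \<forall>z\<in>M. f x y = f x z"
    and "\<forall>x\<in>M. \<forall>y\<in>M. \<forall>z\<in>M. f (f x y) z = x"
  shows "(\<forall>x\<in>M. \<forall>y\<in>M. f x y = x) \<longleftrightarrow> avoids M f N_carrier N_op"
proof
  assume L: "\<forall>x\<in>M. \<forall>y\<in>M. f x y = x"
  show "avoids M f N_carrier N_op"
    unfolding avoids_def
  proof
    assume "\<exists>S. submagma S M f \<and> magma_iso N_carrier N_op S f"
    then obtain S h where S: "S \<subseteq> M" and b: "bij_betw h N_carrier S"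
      and hh: "\<forall>x\<in>N_carrier. \<forall>y\<in>N_carrier. h (N_op x y) = f (h x) (h y)"
      unfolding submagma_def magma_iso_def by blast
    have 0: "(0::nat) \<in> N_carrier" "(1::nat) \<in> N_carrier" by (auto simp: N_carrier_def)
    have "h 1 = f (h 0) (h 0)" using hh 0 by (force simp: N_op_def)
    also have "\<dots> = h 0" using L b S 0 by (auto simp: bij_betw_def)
    finally have "h 1 = h 0" .
    with b 0 show False by (auto simp: bij_betw_def inj_on_def)
  qed
next
  assume A: "avoids M f N_carrier N_op"
  show "\<forall>x\<in>M. \<forall>y\<in>M. f x y = x"
  proof (rule ccontr)
    assume "\<not> ?thesis"
    then obtain a b where ab: "a \<in> M" "b \<in> M" "f a b \<noteq> a" by blast
    define c where "c = f a b"
    have cM: "c \<in> M" using assms(1) ab unfolding magma_def c_def by blast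
    have ca: "\<forall>z\<in>M. f c z = a" using assms(3) ab unfolding c_def by blast
    have ac: "\<forall>z\<in>M. f a z = c" using assms(2) ab unfolding c_def by metis
    define h where "h = (\<lambda>n::nat. if n = 0 then a else c)"
    have "submagma {a, c} M f"
      unfolding submagma_def magma_def using ab cM ca ac by auto
    moreover have "magma_iso N_carrier N_op {a, c} f"
      unfolding magma_iso_def
    proof (intro exI conjI)
      show "bij_betw h N_carrier {a, c}"
        using ab(3) unfolding bij_betw_def inj_on_def h_def N_carrier_def c_def by auto
      show "\<forall>x\<in>N_carrier. \<forall>y\<in>N_carrier. h (N_op x y) = f (h x) (h y)"
        using ab cM ca ac unfolding h_def N_carrier_def N_op_def by auto
    qed
    ultimately show False using A unfolding avoids_def by blast
  qed
qed

end
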